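(* Consider the Nested Logit model with outside option described in the context. For each $S \in \mathcal{S} \cup \{[n]\}$, suppose $m$ independent choices are sampled from the distribution $\phi(\cdot, S)$ on $S \cup \{0\}$ (independently across assortments), and let $\hat\phi(i,S)$ be the empirical frequency with which $i \in S \cup \{0\}$ is chosen among these $m$ samples. Let $\rho, \Delta, \delta \in (0,1)$ be such that $\phi(i,[n]) \ge \rho$ for all $i \in [n] \cup \{0\}$ and $\left|\frac{\phi(i,S)}{\phi(i,S)+\phi(j,S)} - \frac{\phi(i,[n])}{\phi(i,[n])+\phi(j,[n])}\right| \ge \Delta$ for all $S \in \mathcal{S}$ and $i,j \in S \cup \{0\}$ with $\mathsf{BF}(i,S) \neq \mathsf{BF}(j,S)$. Let $K = (|\mathcal{S}|+1)\left(n+1+\binom{n+1}{2}\right)$. There is an absolute numerical constant $C$ such that, if $m \ge 3C^2 \frac{\log(2K/\delta)}{\rho \Delta^2}$, then with probability at least $1-\delta$, for all $S \in \mathcal{S}$ and all $i,j \in S \cup \{0\}$: $|z(i \succ j, S)| \le 8\sqrt{3\log(2K/\delta)}$ if and only if $\mathsf{BF}(i,S) = \mathsf{BF}(j,S)$.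
   Context: Items: $[n]=\{1,\dots,n\}$ with $n\ge 2$. Experiment design: fix an integer base $b \ge 2$, let $L = \lceil \log_b n \rceil$, fix an injective map $\sigma: [n] \to \{0,\dots,b-1\}^L$ with coordinates $\sigma_\ell(i)$, let $S_{\ell,-d} = \{i \in [n] : \sigma_\ell(i) \neq d\}$ for $\ell \in \{1,\dots,L\}$, $d \in \{0,\dots,b-1\}$, and $\mathcal{S} = \{S_{\ell,-d}\}_{\ell,d}$; the control assortment $[n]$ is also offered. Nested Logit model with outside option: $\mathcal{N}$ is a partition of $[n]$ into nests, $N(i)$ the nest containing $i$; weights $v_i > 0$; parameters $\lambda_N \in [0,1]$, with an extra weight $v_N>0$ when $\lambda_N=0$. $v_N(S) = (\sum_{i \in N \cap S} v_i)^{\lambda_N}$ if $\lambda_N \in (0,1]$, $v_N(S) = v_N \mathbf{1}(N \cap S \neq \emptyset)$ if $\lambda_N = 0$. For $i \in S$, $\phi(i,S) = \frac{v_{N(i)}(S)}{1 + \sum_{N} v_N(S)} \cdot \frac{v_i}{\sum_{j \in N(i) \cap S} v_j}$, and $\phi(0,S) = \frac{1}{1 + \sum_{N} v_N(S)}$. Boost factor: $\mathsf{BF}(i,S) = \phi(i,S)/\phi(i,[n])$ for $i \in S \cup \{0\}$. Test statistic: writing $a = \hat\phi(i,S)$, $c = \hat\phi(j,S)$, $a' = \hat\phi(i,[n])$, $c' = \hat\phi(j,[n])$, $z(i \succ j, S) = \dfrac{\frac{a}{a+c} - \frac{a'}{a'+c'}}{\sqrt{\frac{a+a'}{a+c+a'+c'}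 \cdot \frac{c+c'}{a+c+a'+c'} \cdot \left(\frac{1/m}{a+c} + \frac{1/m}{a'+c'}\right)}}$. *)

theory Defs
  imports "HOL-Probability.Probability"
begin

definition num_levels :: "nat \<Rightarrow> nat \<Rightarrow> nat" where
  "num_levels b n = nat \<lceil>log (real b) (real n)\<rceil>"

text \<open>code i is the base-b code of item i, a list of length L with entries in {0..b-1};
  the coordinate sigma_l(i) (l in {1..L}) is code i ! (l - 1).\<close>
definition coord :: "(nat \<Rightarrow> nat list) \<Rightarrow> nat \<Rightarrow> nat \<Rightarrow> nat" where
  "coord code l i = code i ! (l - 1)"

definition S_minus :: "nat \<Rightarrow> (nat \<Rightarrow> nat list) \<Rightarrow> nat \<Rightarrow> nat \<Rightarrow> nat set" where
  "S_minus n code l d = {i \<in> {1..n}. coord code l i \<noteq> d}"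

definition design :: "nat \<Rightarrow> nat \<Rightarrow> (nat \<Rightarrow> nat list) \<Rightarrow> nat set set" where
  "design n b code =
     {S. \<exists>l \<in> {1..num_levels b n}. \<exists>d < b. S = S_minus n code l d}"

section \<open>Nested Logit model with outside option (items 1..n, outside option 0)\<close>

definition is_partition :: "nat set set \<Rightarrow> nat set \<Rightarrow> bool" where
  "is_partition Ns U \<longleftrightarrow> (\<forall>N\<in>Ns. N \<noteq> {}) \<and> \<Union>Ns = U \<and>
     (\<forall>N\<in>Ns. \<forall>N'\<in>Ns. N \<noteq> N' \<longrightarrow> N \<inter> N' = {})"

definition nest_of :: "nat set set \<Rightarrow> nat \<Rightarrow> nat set" where
  "nest_of Ns i = (THE N. N \<in> Ns \<and> i \<in> N)"

text \<open>v_N(S); w N is the extra weight v_N used when lambda_N = 0.\<close>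
definition nest_val ::
  "(nat \<Rightarrow> real) \<Rightarrow> (nat set \<Rightarrow> real) \<Rightarrow> (nat set \<Rightarrow> real) \<Rightarrow> nat set \<Rightarrow> nat set \<Rightarrow> real" where
  "nest_val v lam w N S =
     (if lam N = 0 then (if N \<inter> S \<noteq> {} then w N else 0)
      else (\<Sum>i\<in>N \<inter> S. v i) powr lam N)"

definition nl_phi ::
  "nat set set \<Rightarrow> (nat \<Rightarrow> real) \<Rightarrow> (nat set \<Rightarrow> real) \<Rightarrow> (nat set \<Rightarrow> real) \<Rightarrow> nat \<Rightarrow> nat set \<Rightarrow> real" where
  "nl_phi Ns v lam w i S =
     (let D = 1 + (\<Sum>N\<in>Ns. nest_val v lam w N S) in
      if i = 0 then 1 / D
      else if i \<in> S then
        nest_val v lam w (nest_of Ns i) S / D * (v i / (\<Sum>j \<in> nest_of Ns i \<inter> S. v j))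
      else 0)"

definition boost ::
  "nat \<Rightarrow> nat set set \<Rightarrow> (nat \<Rightarrow> real) \<Rightarrow> (nat set \<Rightarrow> real) \<Rightarrow> (nat set \<Rightarrow> real) \<Rightarrow> nat \<Rightarrow> nat set \<Rightarrow> real" where
  "boost n Ns v lam w i S = nl_phi Ns v lam w i S / nl_phi Ns v lam w i {1..n}"

definition choice_pmf ::
  "nat set set \<Rightarrow> (nat \<Rightarrow> real) \<Rightarrow> (nat set \<Rightarrow> real) \<Rightarrow> (nat set \<Rightarrow> real) \<Rightarrow> nat set \<Rightarrow> nat pmf" where
  "choice_pmf Ns v lam w S = embed_pmf (\<lambda>i. nl_phi Ns v lam w i S)"

definition sample_pmf ::
  "nat set set \<Rightarrow> nat \<Rightarrow> nat set set \<Rightarrow> (nat \<Rightarrow> real) \<Rightarrow> (nat set \<Rightarrow> real) \<Rightarrow> (nat set \<Rightarrow> real)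
     \<Rightarrow> (nat set \<times> nat \<Rightarrow> nat) pmf" where
  "sample_pmf A m Ns v lam w =
     Pi_pmf (A \<times> {..<m}) 0 (\<lambda>(S, k). choice_pmf Ns v lam w S)"

definition emp_freq :: "nat \<Rightarrow> (nat set \<times> nat \<Rightarrow> nat) \<Rightarrow> nat \<Rightarrow> nat set \<Rightarrow> real" where
  "emp_freq m \<omega> i S = real (card {k \<in> {..<m}. \<omega> (S, k) = i}) / real m"

definition zstat :: "nat \<Rightarrow> real \<Rightarrow> real \<Rightarrow> real \<Rightarrow> real \<Rightarrow> real" where
  "zstat m a c a' c' =
     (a / (a + c) - a' / (a' + c')) /
     sqrt ((a + a') / (a + c + a' + c') * ((c + c') / (a + c + a' + c')) *
           ((1 / real m) / (a + c) + (1 / real m) / (a' + c')))"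

definition z_test :: "nat \<Rightarrow> nat \<Rightarrow> (nat set \<times> nat \<Rightarrow> nat) \<Rightarrow> nat \<Rightarrow> nat \<Rightarrow> nat set \<Rightarrow> real" where
  "z_test n m \<omega> i j S =
     zstat m (emp_freq m \<omega> i S) (emp_freq m \<omega> j S)
             (emp_freq m \<omega> i {1..n}) (emp_freq m \<omega> j {1..n})"

end

theory Submission
  imports Defs
begin


lemma exp_quad:
  fixes x :: real assumes "x \<le> 1/2" shows "exp x \<le> 1 + x + 2*x^2"
proof -
  have h1: "1 - x \<le> exp (-x)" using exp_ge_add_one_self[of "-x"] by simp
  have pos: "0 < 1 - x" using assms by simp
  have "exp x = 1 / exp (-x)" by (simp add: exp_minus field_simps)
  also have "\<dots> \<le> 1 / (1 - x)" using h1 pos by (intro divide_left_mono) auto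
  also have "\<dots> \<le> 1 + x + 2*x^2"
  proof -
    have "1 \<le> (1 + x + 2*x^2) * (1 - x)"
    proof -
      have "(1 + x + 2*x^2) * (1 - x) = 1 + x^2 * (1 - 2*x)" by (simp add: algebra_simps power2_eq_square)
      moreover have "0 \<le> x^2 * (1 - 2*x)" using assms by simp
      ultimately show ?thesis by simp
    qed
    thus ?thesis using pos by (simp add: field_simps)
  qed
  finally show ?thesis .
qed

lemma binom_mgf:
  fixes p s x :: real
  assumes p: "p \<in> {0..1}"
  shows "measure_pmf.prob (binomial_pmf m p) {k. s * x \<le> s * real k}
           \<le> exp (- s * x + real m * p * (exp s - 1))"
proof -
  let ?M = "binomial_pmf m p"
  let ?B = "{k. s * x \<le> s * real k}"
  have sub: "set_pmf ?M \<subseteq> {..m}"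
    using p by (auto simp: set_pmf_binomial_eq split: if_splits)
  have "measure_pmf.prob ?M ?B = measure_pmf.prob ?M (?B \<inter> set_pmf ?M)"
    by (simp add: measure_Int_set_pmf)
  also have "\<dots> \<le> measure_pmf.prob ?M (?B \<inter> {..m})"
    using sub by (intro measure_pmf.finite_measure_mono) auto
  also have "\<dots> = (\<Sum>k\<in>?B \<inter> {..m}. pmf ?M k)"
    by (simp add: measure_measure_pmf_finite)
  also have "\<dots> \<le> (\<Sum>k\<in>{..m}. pmf ?M k * exp (s * real k - s * x))"
  proof -
    have "(\<Sum>k\<in>?B \<inter> {..m}. pmf ?M k) \<le> (\<Sum>k\<in>?B \<inter> {..m}. pmf ?M k * exp (s * real k - s * x))"
    proof (intro sum_mono)
      fix k assume "k \<in> ?B \<inter> {..m}"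
      hence "1 \<le> exp (s * real k - s * x)" by simp
      thus "pmf ?M k \<le> pmf ?M k * exp (s * real k - s * x)"
        using pmf_nonneg[of ?M k] by (simp add: mult_le_cancel_left1)
    qed
    also have "\<dots> \<le> (\<Sum>k\<in>{..m}. pmf ?M k * exp (s * real k - s * x))"
      by (intro sum_mono2) auto
    finally show ?thesis .
  qed
  also have "\<dots> = exp (- s * x) * (\<Sum>k\<in>{..m}. real (m choose k) * (p * exp s) ^ k * (1 - p) ^ (m - k))"
    using p
    by (simp add: sum_distrib_left exp_diff exp_minus power_mult_distrib exp_of_nat_mult[symmetric]
        field_simps mult_exp_exp)
  also have "(\<Sum>k\<in>{..m}. real (m choose k) * (p * exp s) ^ k * (1 - p) ^ (m - k)) = (p * exp s + (1 - p)) ^ m"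
    by (simp add: binomial_ring atLeast0AtMost)
  also have "(p * exp s + (1 - p)) ^ m \<le> exp (p * (exp s - 1)) ^ m"
  proof (intro power_mono)
    show "p * exp s + (1 - p) \<le> exp (p * (exp s - 1))"
      using exp_ge_add_one_self[of "p * (exp s - 1)"] by (simp add: algebra_simps)
    show "0 \<le> p * exp s + (1 - p)" using p by simp
  qed
  also have "exp (p * (exp s - 1)) ^ m = exp (real m * p * (exp s - 1))"
    by (simp add: exp_of_nat_mult[symmetric] mult.assoc)
  finally show ?thesis
    by (simp add: mult_left_mono exp_add[symmetric] algebra_simps)
qed


lemma chernoff_upper:
  fixes p t :: real
  assumes p: "p \<in> {0..1}" and t: "0 \<le> t" "t \<le> 2"
  shows "measure_pmf.prob (binomial_pmf m p) {k. real m * p * (1 + t) \<le> real k}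
           \<le> exp (- (real m * p * t^2 / 8))"
proof -
  let ?s = "t / 4" and ?x = "real m * p * (1 + t)"
  have "measure_pmf.prob (binomial_pmf m p) {k. ?x \<le> real k}
        \<le> measure_pmf.prob (binomial_pmf m p) {k. ?s * ?x \<le> ?s * real k}"
    using t by (intro measure_pmf.finite_measure_mono) (auto intro: mult_left_mono)
  also have "\<dots> \<le> exp (- ?s * ?x + real m * p * (exp ?s - 1))"
    by (rule binom_mgf[OF p])
  also have "\<dots> \<le> exp (- (real m * p * t^2 / 8))"
  proof -
    have "exp ?s - 1 \<le> ?s + 2 * ?s^2" using exp_quad[of ?s] t by simp
    hence "real m * p * (exp ?s - 1) \<le> real m * p * (?s + 2 * ?s^2)"
      using p by (intro mult_left_mono) auto
    thus ?thesis by (simp add: algebra_simps power2_eq_square)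
  qed
  finally show ?thesis .
qed

lemma chernoff_lower:
  fixes p t :: real
  assumes p: "p \<in> {0..1}" and t: "0 \<le> t" "t \<le> 2"
  shows "measure_pmf.prob (binomial_pmf m p) {k. real k \<le> real m * p * (1 - t)}
           \<le> exp (- (real m * p * t^2 / 8))"
proof -
  let ?s = "- t / 4" and ?x = "real m * p * (1 - t)"
  have "measure_pmf.prob (binomial_pmf m p) {k. real k \<le> ?x}
        \<le> measure_pmf.prob (binomial_pmf m p) {k. ?s * ?x \<le> ?s * real k}"
    using t by (intro measure_pmf.finite_measure_mono) (auto intro: mult_left_mono)
  also have "\<dots> \<le> exp (- ?s * ?x + real m * p * (exp ?s - 1))"
    by (rule binom_mgf[OF p])
  also have "\<dots> \<le> exp (- (real m * p * t^2 / 8))"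
  proof -
    have "exp ?s - 1 \<le> ?s + 2 * ?s^2" using exp_quad[of ?s] t by simp
    hence "real m * p * (exp ?s - 1) \<le> real m * p * (?s + 2 * ?s^2)"
      using p by (intro mult_left_mono) auto
    thus ?thesis by (simp add: algebra_simps power2_eq_square)
  qed
  finally show ?thesis .
qed

lemma chernoff_sq:
  fixes p E :: real
  assumes p: "0 < p" "p \<le> 1" and E: "0 \<le> E" "E \<le> 4 * p" and m: "m > 0"
  shows "measure_pmf.prob (binomial_pmf m p) {k. (real k / real m - p)^2 > E * p}
           \<le> 2 * exp (- (real m * E / 8))"
proof -
  define t where "t = sqrt (E / p)"
  have t0: "0 \<le> t" using E p by (simp add: t_def)
  have "E / p \<le> 4" using E p by (simp add: field_simps)
  hence t2: "t \<le> 2" unfolding t_def using real_sqrt_le_mono[of "E/p" 4] by simp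
  have tt: "t^2 = E / p" unfolding t_def using E p by simp
  have Ep: "E * p = (t * p)^2" proof -
    have "E = p * t^2" using tt p by (simp add: field_simps)
    thus ?thesis by (simp add: power2_eq_square)
  qed
  have mpos: "real m > 0" using m by simp
  have sub: "{k. (real k / real m - p)^2 > E * p} \<subseteq>
        {k. real m * p * (1 + t) \<le> real k} \<union> {k. real k \<le> real m * p * (1 - t)}"
  proof
    fix k assume "k \<in> {k. (real k / real m - p)^2 > E * p}"
    hence "(t * p)^2 < (real k / real m - p)^2" by (simp add: Ep)
    hence lt: "t * p < \<bar>real k / real m - p\<bar>"
      using power2_less_imp_less[of "t * p" "\<bar>real k / real m - p\<bar>"] by simp
    show "k \<in> {k. real m * p * (1 + t) \<le> real k} \<union> {k. real k \<le> real m * p * (1 - t)}"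
    proof (cases "real k / real m - p \<ge> 0")
      case True
      hence "p + t * p \<le> real k / real m" using lt by simp
      hence "real m * (p + t * p) \<le> real k" using mpos by (simp add: field_simps)
      thus ?thesis by (simp add: algebra_simps)
    next
      case False
      hence "real k / real m \<le> p - t * p" using lt by simp
      hence "real k \<le> real m * (p - t * p)" using mpos by (simp add: field_simps)
      thus ?thesis by (simp add: algebra_simps)
    qed
  qed
  have "measure_pmf.prob (binomial_pmf m p) {k. (real k / real m - p)^2 > E * p}
     \<le> measure_pmf.prob (binomial_pmf m p) ({k. real m * p * (1 + t) \<le> real k} \<union> {k. real k \<le> real m * p * (1 - t)})"
    using sub by (intro measure_pmf.finite_measure_mono) auto
  also have "\<dots> \<le> measure_pmf.prob (binomial_pmf m p) {k. real m * p * (1 + t) \<le> real k}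
       + measure_pmf.prob (binomial_pmf m p) {k. real k \<le> real m * p * (1 - t)}"
    by (rule measure_Un_le) auto
  also have "\<dots> \<le> exp (- (real m * p * t^2 / 8)) + exp (- (real m * p * t^2 / 8))"
    using p t0 t2 by (intro add_mono chernoff_upper chernoff_lower) auto
  also have "real m * p * t^2 / 8 = real m * E / 8" using tt p by simp
  finally show ?thesis by simp
qed

lemma close_est:
  fixes a x E :: real
  assumes "a > 0" "(x - a)^2 \<le> E * a" "E \<le> a / 16"
  shows "3/4 * a \<le> x" "x \<le> 5/4 * a"
proof -
  have "E * a \<le> a / 16 * a" using assms by (intro mult_right_mono) auto
  hence "(x - a)^2 \<le> a / 16 * a" using assms(2) by linarith
  also have "a / 16 * a = (a/4)^2" by (simp add: power2_eq_square)
  finally have "(x - a)^2 \<le> (a/4)^2" .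
  hence "\<bar>x - a\<bar> \<le> a/4" using assms(1)
    by (metis abs_le_square_iff abs_of_pos zero_less_divide_iff zero_less_numeral)
  thus "3/4 * a \<le> x" "x \<le> 5/4 * a" by linarith+
qed

lemma base_est:
  fixes a c x y E :: real
  assumes "a > 0" "c > 0" "x + y > 0" "(x - a)^2 \<le> E * a" "(y - c)^2 \<le> E * c"
  shows "(x/(x+y) - a/(a+c))^2 * ((x+y)^2 * (a+c)^2) \<le> 2*E*a*c*(a+c)"
proof -
  have e1: "x/(x+y) * ((x+y) * (a+c)) = x * (a+c)" using assms by simp
  have e2: "a/(a+c) * ((x+y) * (a+c)) = a * (x+y)" using assms by simp
  have eq: "(x/(x+y) - a/(a+c)) * ((x+y) * (a+c)) = (x - a) * c - a * (y - c)"
    unfolding left_diff_distrib e1 e2 by (simp add: algebra_simps)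
  have "(x/(x+y) - a/(a+c))^2 * ((x+y)^2 * (a+c)^2) = ((x - a) * c - a * (y - c))^2"
    by (simp flip: eq add: power_mult_distrib)
  also have "\<dots> \<le> 2 * (((x - a) * c)^2 + (a * (y - c))^2)"
    by (smt (verit) sum_squares_ge_zero power2_diff power2_sum zero_le_power2 ) 
  also have "\<dots> = 2 * ((x - a)^2 * c^2 + a^2 * (y - c)^2)" by (simp add: power_mult_distrib)
  also have "\<dots> \<le> 2 * ((E * a) * c^2 + a^2 * (E * c))"
    using assms by (intro mult_left_mono add_mono mult_right_mono) auto
  also have "\<dots> = 2*E*a*c*(a+c)" by (simp add: algebra_simps power2_eq_square)
  finally show ?thesis .
qed

lemma X2_bound:
  fixes a c x y E :: real
  assumes "a > 0" "c > 0" "x + y \<ge> 3/4 * (a + c)" "E \<ge> 0"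
    "(x - a)^2 \<le> E * a" "(y - c)^2 \<le> E * c"
  shows "(x/(x+y) - a/(a+c))^2 \<le> 8/3 * E * (a/(a+c)) * (c/(a+c)) / (x+y)"
proof -
  define s where "s = a + c"
  define t where "t = x + y"
  have s: "s > 0" using assms by (simp add: s_def)
  have t: "t > 0" using assms s by (simp add: s_def t_def)
  have b: "(x/t - a/s)^2 * (t^2 * s^2) \<le> 2 * E * a * c * s"
    using base_est[OF assms(1,2) _ assms(5,6)] t unfolding s_def t_def by simp
  have "(x/t - a/s)^2 \<le> 2 * E * a * c * s / (t^2 * s^2)"
    using b s t by (simp add: pos_le_divide_eq)
  also have "2 * E * a * c * s / (t^2 * s^2) = 2*E*(a/s)*(c/s)*(s/t)/t"
    using s t by (simp add: field_simps power2_eq_square)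
  also have "\<dots> \<le> 2*E*(a/s)*(c/s)*(4/3)/t"
  proof -
    have "s / t \<le> 4/3" using assms(3) s t unfolding s_def t_def by (simp add: field_simps)
    moreover have "0 \<le> 2*E*(a/s)*(c/s)" using assms s by simp
    ultimately show ?thesis using t
      by (intro divide_right_mono mult_left_mono) auto
  qed
  also have "\<dots> = 8/3 * E * (a/s) * (c/s) / t" by simp
  finally show ?thesis unfolding s_def t_def .
qed

lemma X2_alt:
  fixes a c x y E \<rho> :: real
  assumes "\<rho> > 0" "a \<ge> \<rho>" "c \<ge> \<rho>" "x + y \<ge> 3/4 * (a + c)" "E \<ge> 0"
    "(x - a)^2 \<le> E * a" "(y - c)^2 \<le> E * c"
  shows "(x/(x+y) - a/(a+c))^2 \<le> 4/9 * E / \<rho>"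
proof -
  define s where "s = a + c"
  define t where "t = x + y"
  have s: "s > 0" using assms by (simp add: s_def)
  have t: "t \<ge> 3/2 * \<rho>" using assms unfolding s_def t_def by (simp add: algebra_simps)
  have tpos: "t > 0" using t assms by linarith
  have "(x/t - a/s)^2 \<le> 8/3 * E * (a/s) * (c/s) / t"
    using X2_bound[OF _ _ assms(4,5,6,7)] assms unfolding s_def t_def by simp
  also have "\<dots> \<le> 8/3 * E * (1/4) / t"
  proof -
    have "4 * (a * c) \<le> s^2" unfolding s_def
      using sum_squares_ge_zero[of "a - c" 0] by (simp add: power2_eq_square algebra_simps)
    hence "(a/s) * (c/s) \<le> 1/4" using s by (simp add: field_simps power2_eq_square)
    hence "8/3 * E * ((a/s) * (c/s)) \<le> 8/3 * E * (1/4)"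
      using assms by (intro mult_left_mono) auto
    hence "8/3 * E * (a/s) * (c/s) \<le> 8/3 * E * (1/4)" by (simp add: mult.assoc)
    thus ?thesis using tpos by (intro divide_right_mono) auto
  qed
  also have "\<dots> \<le> 8/3 * E * (1/4) / (3/2 * \<rho>)"
    using t assms by (intro divide_left_mono) auto
  also have "\<dots> = 4/9 * E / \<rho>" by simp
  finally show ?thesis unfolding s_def t_def .
qed

lemma frac_lower:
  fixes x x' T a a' s s' p :: real
  assumes "x + x' \<ge> 3/4 * (a + a')" "a = p * s" "a' = p * s'" "0 < T" "T \<le> 5/4 * (s + s')"
    "p \<ge> 0" "s + s' > 0"
  shows "(x + x') / T \<ge> 3/5 * p"
proof -
  have "3/5 * p * T \<le> 3/5 * p * (5/4 * (s + s'))"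
    using assms by (intro mult_left_mono) auto
  also have "\<dots> = 3/4 * (a + a')" using assms by (simp add: algebra_simps)
  also have "\<dots> \<le> x + x'" using assms by simp
  finally show ?thesis using assms by (simp add: field_simps)
qed

lemma det_null:
  fixes a c a' c' x y x' y' E \<rho> :: real
  assumes r: "\<rho> > 0" "a \<ge> \<rho>" "c \<ge> \<rho>" "a' \<ge> \<rho>" "c' \<ge> \<rho>"
    and E: "E \<ge> 0" "E \<le> \<rho> / 16"
    and d: "(x - a)^2 \<le> E * a" "(y - c)^2 \<le> E * c" "(x' - a')^2 \<le> E * a'" "(y' - c')^2 \<le> E * c'"
    and eqp: "a/(a+c) = a'/(a'+c')"
  shows "(x/(x+y) - x'/(x'+y'))^2 \<le> 24 * E * ((x+x')/(x+y+x'+y')) * ((y+y')/(x+y+x'+y'))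
            * (1/(x+y) + 1/(x'+y'))"
proof -
  have Ea: "E \<le> a / 16" "E \<le> c / 16" "E \<le> a' / 16" "E \<le> c' / 16" using r E by auto
  have pos: "a > 0" "c > 0" "a' > 0" "c' > 0" using r by auto
  note cx = close_est[OF pos(1) d(1) Ea(1)] close_est[OF pos(2) d(2) Ea(2)]
            close_est[OF pos(3) d(3) Ea(3)] close_est[OF pos(4) d(4) Ea(4)]
  define s where "s = a + c"
  define s' where "s' = a' + c'"
  define p where "p = a / s"
  define q where "q = c / s"
  have sp: "s > 0" "s' > 0" using pos by (auto simp: s_def s'_def)
  have ap: "a = p * s" "c = q * s" using sp by (auto simp: p_def q_def)
  have p': "a' = p * s'" using eqp sp by (simp add: p_def s_def s'_def field_simps)
  have q1: "q = 1 - p" using sp by (simp add: p_def q_def s_def field_simps)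
  have "c' = s' - p * s'" using p' by (simp add: s'_def)
  hence q': "c' = q * s'" using q1 by (simp add: left_diff_distrib)
  have pq0: "p \<ge> 0" "q \<ge> 0" using pos sp by (auto simp: p_def q_def)
  define t where "t = x + y"
  define t' where "t' = x' + y'"
  have tge: "t \<ge> 3/4 * s" "t' \<ge> 3/4 * s'" using cx by (auto simp: t_def t'_def s_def s'_def)
  have tpos: "t > 0" "t' > 0" using tge sp by auto
  define X where "X = x/t - p"
  define X' where "X' = x'/t' - p"
  have X2: "X^2 \<le> 8/3 * E * p * q / t"
    using X2_bound[of a c x y E] pos E d tge
    unfolding X_def t_def p_def q_def s_def by (simp add: algebra_simps)
  have p'': "p = a'/(a'+c')" using eqp by (simp add: p_def s_def)
  have q'': "q = c'/(a'+c')" using q1 p'' pos by (simp add: field_simps)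
  have X2': "X'^2 \<le> 8/3 * E * p * q / t'"
    using X2_bound[of a' c' x' y' E] pos E d tge
    unfolding X'_def t'_def p'' q'' s'_def by (simp add: algebra_simps)
  have num: "x/t - x'/t' = X - X'" by (simp add: X_def X'_def)
  have "(X - X')^2 \<le> 2 * X^2 + 2 * X'^2"
    using sum_squares_ge_zero[of "X + X'" 0] by (simp add: power2_eq_square algebra_simps)
  also have "\<dots> \<le> 2 * (8/3 * E * p * q / t) + 2 * (8/3 * E * p * q / t')"
    using X2 X2' by linarith
  also have "\<dots> = 16/3 * (E * (p * q)) * (1/t + 1/t')" by (simp add: field_simps)
  finally have n2: "(x/t - x'/t')^2 \<le> 16/3 * (E * (p * q)) * (1/t + 1/t')" using num by simp
  define T where "T = x + y + x' + y'"
  have Tpos: "T > 0" using tpos by (simp add: T_def t_def t'_def)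
  have Tle: "T \<le> 5/4 * (s + s')" using cx by (simp add: T_def s_def s'_def)
  have P: "(x + x') / T \<ge> 3/5 * p"
    by (rule frac_lower[OF _ ap(1) p' Tpos Tle pq0(1)]) (use cx sp in auto)
  have Q: "(y + y') / T \<ge> 3/5 * q"
    by (rule frac_lower[OF _ ap(2) q' Tpos Tle pq0(2)]) (use cx sp in auto)
  have "9/25 * (p * q) \<le> ((x + x') / T) * ((y + y') / T)"
  proof -
    have "0 \<le> (x + x') / T" using P pq0 by linarith
    hence "3/5 * p * (3/5 * q) \<le> ((x + x') / T) * ((y + y') / T)"
      using mult_mono[OF P Q] pq0 by simp
    thus ?thesis by (simp add: mult_ac)
  qed
  hence PQ: "16/3 * (p * q) \<le> 24 * (((x + x') / T) * ((y + y') / T))"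
    using mult_nonneg_nonneg[OF pq0] by linarith
  have Hpos: "0 \<le> E * (1/t + 1/t')" using tpos E by simp
  have "16/3 * (E * (p * q)) * (1/t + 1/t') = 16/3 * (p * q) * (E * (1/t + 1/t'))" by simp
  also have "\<dots> \<le> 24 * (((x + x') / T) * ((y + y') / T)) * (E * (1/t + 1/t'))"
    using PQ Hpos by (rule mult_right_mono)
  finally have "(x/t - x'/t')^2 \<le> 24 * (((x + x') / T) * ((y + y') / T)) * (E * (1/t + 1/t'))"
    using n2 by linarith
  also have "24 * (((x + x') / T) * ((y + y') / T)) * (E * (1/t + 1/t'))
      = 24 * E * ((x + x') / T) * ((y + y') / T) * (1/t + 1/t')" by (simp only: mult_ac)
  finally show ?thesis unfolding T_def t_def t'_def .
qed

lemma det_alt: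
  fixes a c a' c' x y x' y' E \<rho> \<Delta> :: real
  assumes r: "\<rho> > 0" "a \<ge> \<rho>" "c \<ge> \<rho>" "a' \<ge> \<rho>" "c' \<ge> \<rho>"
    and E: "E \<ge> 0" "300 * E \<le> 8 * \<rho> * \<Delta>^2" and D: "0 < \<Delta>" "\<Delta> \<le> 1"
    and d: "(x - a)^2 \<le> E * a" "(y - c)^2 \<le> E * c" "(x' - a')^2 \<le> E * a'" "(y' - c')^2 \<le> E * c'"
    and gap: "\<bar>a/(a+c) - a'/(a'+c')\<bar> \<ge> \<Delta>"
  shows "(x/(x+y) - x'/(x'+y'))^2 > 24 * E * ((x+x')/(x+y+x'+y')) * ((y+y')/(x+y+x'+y'))
            * (1/(x+y) + 1/(x'+y'))"
proof -
  have D2: "\<Delta>^2 \<le> 1" using D by (simp add: power_le_one)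
  have "8 * \<rho> * \<Delta>^2 \<le> 8 * \<rho> * 1" using D2 r by (intro mult_left_mono) auto
  hence "300 * E \<le> 8 * \<rho>" using E by linarith
  hence E16: "E \<le> \<rho> / 16" using r(1) by linarith
  have Ea: "E \<le> a / 16" "E \<le> c / 16" "E \<le> a' / 16" "E \<le> c' / 16" using r E16 by auto
  have pos: "a > 0" "c > 0" "a' > 0" "c' > 0" using r by auto
  note cx = close_est[OF pos(1) d(1) Ea(1)] close_est[OF pos(2) d(2) Ea(2)]
            close_est[OF pos(3) d(3) Ea(3)] close_est[OF pos(4) d(4) Ea(4)]
  define t where "t = x + y"
  define t' where "t' = x' + y'"
  have tge: "t \<ge> 3/4 * (a + c)" "t' \<ge> 3/4 * (a' + c')" using cx by (auto simp: t_def t'_def)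
  have tge2: "t \<ge> 3/2 * \<rho>" "t' \<ge> 3/2 * \<rho>" using tge r by auto
  have tpos: "t > 0" "t' > 0" using tge2 r by auto
  define X where "X = x/t - a/(a+c)"
  define X' where "X' = x'/t' - a'/(a'+c')"
  have bnd: "4/9 * E / \<rho> \<le> (\<Delta>/8)^2"
  proof -
    have "4/9 * E / \<rho> \<le> 4/9 * (8 * \<rho> * \<Delta>^2 / 300) / \<rho>"
      using E r by (intro divide_right_mono mult_left_mono) auto
    also have "\<dots> = 32/2700 * \<Delta>^2" using r by simp
    also have "\<dots> \<le> (\<Delta>/8)^2" by (simp add: power_divide)
    finally show ?thesis .
  qed
  have "X^2 \<le> (\<Delta>/8)^2"
    using X2_alt[OF r(1,2,3) _ E(1) d(1,2)] tge bnd unfolding X_def t_def by simp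
  hence aX: "\<bar>X\<bar> \<le> \<Delta>/8" using D power2_le_imp_le[of "\<bar>X\<bar>" "\<Delta>/8"] by simp
  have "X'^2 \<le> (\<Delta>/8)^2"
    using X2_alt[OF r(1,4,5) _ E(1) d(3,4)] tge bnd unfolding X'_def t'_def by simp
  hence aX': "\<bar>X'\<bar> \<le> \<Delta>/8" using D power2_le_imp_le[of "\<bar>X'\<bar>" "\<Delta>/8"] by simp
  have "x/t - x'/t' = (a/(a+c) - a'/(a'+c')) + X - X'" by (simp add: X_def X'_def)
  hence "\<bar>x/t - x'/t'\<bar> \<ge> 3/4 * \<Delta>" using gap aX aX' by linarith
  hence "(3/4 * \<Delta>)^2 \<le> \<bar>x/t - x'/t'\<bar>^2" using D by (intro power_mono) auto
  hence "(3/4 * \<Delta>)^2 \<le> (x/t - x'/t')^2" by simp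
  hence num: "9/16 * \<Delta>^2 \<le> (x/t - x'/t')^2" by (simp add: power_mult_distrib power_divide)
  define T where "T = x + y + x' + y'"
  define P where "P = (x + x') / T"
  define Q where "Q = (y + y') / T"
  have Tpos: "T > 0" using tpos by (simp add: T_def t_def t'_def)
  have "P + Q = (x + x' + (y + y')) / T" by (simp add: P_def Q_def add_divide_distrib)
  also have "x + x' + (y + y') = T" by (simp add: T_def)
  finally have PQ1: "P + Q = 1" using Tpos by simp
  have P0: "P \<ge> 0" "Q \<ge> 0" using cx pos Tpos by (auto simp: P_def Q_def)
  have PQ: "P * Q \<le> 1/4"
  proof -
    have "Q = 1 - P" using PQ1 by simp
    hence e: "P * Q = P - P * P" by (simp add: right_diff_distrib)
    have "0 \<le> (P - 1/2) * (P - 1/2)" by simp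
    also have "(P - 1/2) * (P - 1/2) = P * P - P + 1/4" by (simp add: algebra_simps)
    finally show ?thesis using e by linarith
  qed
  have H: "1/t + 1/t' \<le> 4 / (3 * \<rho>)"
  proof -
    have p3: "0 < 3/2 * \<rho>" using r by simp
    have "1/t \<le> 1/(3/2 * \<rho>)"
      by (rule divide_left_mono[OF tge2(1)]) (use p3 tpos in auto)
    moreover have "1/t' \<le> 1/(3/2 * \<rho>)"
      by (rule divide_left_mono[OF tge2(2)]) (use p3 tpos in auto)
    ultimately have "1/t + 1/t' \<le> 1/(3/2 * \<rho>) + 1/(3/2 * \<rho>)" by linarith
    thus ?thesis by simp
  qed
  have "24 * E * P * Q * (1/t + 1/t') = 24 * E * (P * Q) * (1/t + 1/t')" by (simp add: mult_ac)
  also have "\<dots> \<le> 24 * E * (1/4) * (4 / (3 * \<rho>))"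
    using PQ H E P0 tpos by (intro mult_mono) auto
  also have "\<dots> = 8 * E / \<rho>" by simp
  also have "\<dots> \<le> 8 * (8 * \<rho> * \<Delta>^2 / 300) / \<rho>"
    using E r by (intro divide_right_mono mult_left_mono) auto
  also have "\<dots> = 64/300 * \<Delta>^2" using r by simp
  also have "\<dots> < 9/16 * \<Delta>^2" using D by simp
  finally show ?thesis using num unfolding P_def Q_def T_def t_def t'_def by linarith
qed

lemma zstat_sq:
  fixes x y x' y' L :: real
  assumes m: "m > 0" and pos: "x > 0" "y > 0" "x' > 0" "y' > 0" and L: "L \<ge> 0"
  shows "(\<bar>zstat m x y x' y'\<bar> \<le> 8 * sqrt (3 * L)) \<longleftrightarrow>
         (x/(x+y) - x'/(x'+y'))^2 \<le> 24 * (8 * L / real m) * ((x+x')/(x+y+x'+y')) * ((y+y')/(x+y+x'+y'))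
            * (1/(x+y) + 1/(x'+y'))"
proof -
  define n where "n = x/(x+y) - x'/(x'+y')"
  define D where "D = (x + x') / (x + y + x' + y') * ((y + y') / (x + y + x' + y')) *
           ((1 / real m) / (x + y) + (1 / real m) / (x' + y'))"
  define B where "B = 8 * sqrt (3 * L)"
  have Dpos: "D > 0" using m pos unfolding D_def by (intro mult_pos_pos divide_pos_pos add_pos_pos) auto
  have B0: "B \<ge> 0" using L by (simp add: B_def)
  have z: "zstat m x y x' y' = n / sqrt D" by (simp add: zstat_def n_def D_def)
  have sD: "sqrt D > 0" using Dpos by simp
  have "(\<bar>n / sqrt D\<bar> \<le> B) \<longleftrightarrow> (\<bar>n\<bar> \<le> B * sqrt D)"
    using sD by (simp add: abs_divide pos_divide_le_eq)
  also have "\<dots> \<longleftrightarrow> (\<bar>n\<bar> \<le> \<bar>B * sqrt D\<bar>)" using B0 sD by simp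
  also have "\<dots> \<longleftrightarrow> n^2 \<le> (B * sqrt D)^2" by (rule abs_le_square_iff)
  also have "(B * sqrt D)^2 = B^2 * D" using Dpos by (simp add: power_mult_distrib)
  also have "B^2 = 192 * L" using L by (simp add: B_def power_mult_distrib)
  also have "192 * L * D = 24 * (8 * L / real m) * ((x+x')/(x+y+x'+y')) * ((y+y')/(x+y+x'+y'))
            * (1/(x+y) + 1/(x'+y'))"
  proof -
    have g: "\<And>P Q t t' :: real. 192 * L * (P * Q * ((1 / real m) / t + (1 / real m) / t'))
       = 24 * (8 * L / real m) * P * Q * (1/t + 1/t')"
      by (simp add: divide_inverse algebra_simps)
    show ?thesis unfolding D_def by (rule g)
  qed
  finally show ?thesis by (simp add: z n_def B_def)
qed



context
  fixes n :: nat and Ns :: "nat set set" and v :: "nat \<Rightarrow> real" and lam w :: "nat set \<Rightarrow> real"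
  assumes part: "is_partition Ns {1..n}"
    and vpos: "\<forall>i\<in>{1..n}. v i > 0"
    and lam: "\<forall>N\<in>Ns. 0 \<le> lam N \<and> lam N \<le> 1"
    and wpos: "\<forall>N\<in>Ns. lam N = 0 \<longrightarrow> w N > 0"
begin

lemma Ns_U: "\<Union>Ns = {1..n}"
  using part unfolding is_partition_def by (elim conjE)

lemma Ns_sub: "N \<in> Ns \<Longrightarrow> N \<subseteq> {1..n}"
  using Ns_U by (metis Union_upper)

lemma Ns_ne: "N \<in> Ns \<Longrightarrow> N \<noteq> {}"
  using part unfolding is_partition_def by simp

lemma Ns_disj: "N \<in> Ns \<Longrightarrow> N' \<in> Ns \<Longrightarrow> N \<noteq> N' \<Longrightarrow> N \<inter> N' = {}"
  using part unfolding is_partition_def by simp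

lemma Ns_fin: "finite Ns"
proof -
  have "Ns \<subseteq> Pow {1..n}" using Ns_sub by blast
  thus ?thesis by (rule finite_subset) simp
qed

lemma N_fin: "N \<in> Ns \<Longrightarrow> finite N"
  using Ns_sub finite_subset by blast

lemma v_nonneg: "N \<in> Ns \<Longrightarrow> j \<in> N \<Longrightarrow> 0 \<le> v j"
  using Ns_sub vpos by (meson less_imp_le subsetD)

lemma nest_of_eq: assumes "N \<in> Ns" "i \<in> N" shows "nest_of Ns i = N"
  unfolding nest_of_def
proof (rule the_equality)
  show "N \<in> Ns \<and> i \<in> N" using assms by simp
  fix N' assume "N' \<in> Ns \<and> i \<in> N'"
  thus "N' = N" using Ns_disj[of N' N] assms by auto
qed

lemma nest_ex: assumes "i \<in> {1..n}" shows "nest_of Ns i \<in> Ns \<and> i \<in> nest_of Ns i"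
proof -
  have "i \<in> \<Union>Ns" using Ns_U assms by simp
  then obtain N where "N \<in> Ns" "i \<in> N" by (rule UnionE)
  thus ?thesis using nest_of_eq by simp
qed

lemma nv_nonneg: "N \<in> Ns \<Longrightarrow> 0 \<le> nest_val v lam w N S"
  using wpos unfolding nest_val_def by (auto simp: less_imp_le)

lemma nv_empty: "N \<inter> S = {} \<Longrightarrow> nest_val v lam w N S = 0"
  unfolding nest_val_def by simp

lemma V_pos: assumes "N \<in> Ns" "S \<subseteq> {1..n}" "N \<inter> S \<noteq> {}" shows "0 < (\<Sum>j\<in>N \<inter> S. v j)"
proof -
  have "finite (N \<inter> S)" using N_fin assms by auto
  moreover have "\<forall>j\<in>N \<inter> S. 0 < v j" using vpos assms by auto
  ultimately show ?thesis using assms(3) by (intro sum_pos) auto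
qed

definition Dn :: "nat set \<Rightarrow> real" where
  "Dn S = 1 + (\<Sum>N\<in>Ns. nest_val v lam w N S)"

lemma Dn_ge1: "Dn S \<ge> 1"
  unfolding Dn_def using nv_nonneg by (simp add: sum_nonneg)

lemma phi_0: "nl_phi Ns v lam w 0 S = 1 / Dn S"
  by (simp add: nl_phi_def Dn_def Let_def)

lemma phi_in: "i \<noteq> 0 \<Longrightarrow> i \<in> S \<Longrightarrow> nl_phi Ns v lam w i S =
   nest_val v lam w (nest_of Ns i) S / Dn S * (v i / (\<Sum>j \<in> nest_of Ns i \<inter> S. v j))"
  by (simp add: nl_phi_def Dn_def Let_def)

lemma phi_out: "i \<noteq> 0 \<Longrightarrow> i \<notin> S \<Longrightarrow> nl_phi Ns v lam w i S = 0"
  by (simp add: nl_phi_def Let_def)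

lemma phi_nonneg: assumes "S \<subseteq> {1..n}" shows "0 \<le> nl_phi Ns v lam w i S"
proof (cases "i = 0")
  case True thus ?thesis using Dn_ge1[of S] by (simp add: phi_0)
next
  case False
  show ?thesis
  proof (cases "i \<in> S")
    case True
    hence i: "i \<in> {1..n}" using assms by auto
    note ne = nest_ex[OF i]
    have "0 \<le> nest_val v lam w (nest_of Ns i) S" using ne nv_nonneg by blast
    moreover have "0 < (\<Sum>j \<in> nest_of Ns i \<inter> S. v j)" using V_pos ne True assms by blast
    moreover have "0 < v i" using vpos i by auto
    ultimately show ?thesis using False True Dn_ge1[of S] by (simp add: phi_in)
  qed (simp add: phi_out False)
qed

lemma phi_sum: assumes S: "S \<subseteq> {1..n}"
  shows "(\<Sum>i\<in>insert 0 S. nl_phi Ns v lam w i S) = 1"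
proof -
  have finS: "finite S" using S finite_subset by blast
  have SU: "(\<Union>N\<in>Ns. N \<inter> S) = S" using Ns_U S by auto
  have inner: "(\<Sum>i\<in>S. nl_phi Ns v lam w i S) = (\<Sum>N\<in>Ns. nest_val v lam w N S / Dn S)"
  proof -
    have "(\<Sum>i\<in>S. nl_phi Ns v lam w i S) = (\<Sum>i\<in>(\<Union>N\<in>Ns. N \<inter> S). nl_phi Ns v lam w i S)"
      by (simp only: SU)
    also have "\<dots> = (\<Sum>N\<in>Ns. \<Sum>i\<in>N \<inter> S. nl_phi Ns v lam w i S)"
      using Ns_fin N_fin Ns_disj
      by (intro sum.UNION_disjoint) auto
    also have "\<dots> = (\<Sum>N\<in>Ns. nest_val v lam w N S / Dn S)"
    proof (intro sum.cong refl)
      fix N assume N: "N \<in> Ns"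
      show "(\<Sum>i\<in>N \<inter> S. nl_phi Ns v lam w i S) = nest_val v lam w N S / Dn S"
      proof (cases "N \<inter> S = {}")
        case True thus ?thesis by (simp add: nv_empty)
      next
        case False
        have "(\<Sum>i\<in>N \<inter> S. nl_phi Ns v lam w i S)
            = (\<Sum>i\<in>N \<inter> S. nest_val v lam w N S / Dn S * (v i / (\<Sum>j \<in> N \<inter> S. v j)))"
        proof (intro sum.cong refl)
          fix i assume i: "i \<in> N \<inter> S"
          hence "i \<noteq> 0" using S by auto
          thus "nl_phi Ns v lam w i S = nest_val v lam w N S / Dn S * (v i / (\<Sum>j \<in> N \<inter> S. v j))"
            using i nest_of_eq[OF N] by (simp add: phi_in)
        qed
        also have "\<dots> = nest_val v lam w N S / Dn S * ((\<Sum>i\<in>N \<inter> S. v i) / (\<Sum>j \<in> N \<inter> S. v j))"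
          by (simp only: sum_divide_distrib sum_distrib_left)
        also have "\<dots> = nest_val v lam w N S / Dn S"
          using V_pos[OF N S False] by simp
        finally show ?thesis .
      qed
    qed
    finally show ?thesis .
  qed
  have "0 \<notin> S" using S by auto
  hence "(\<Sum>i\<in>insert 0 S. nl_phi Ns v lam w i S) = 1 / Dn S + (\<Sum>i\<in>S. nl_phi Ns v lam w i S)"
    using finS by (simp add: phi_0)
  also have "\<dots> = 1 / Dn S + (\<Sum>N\<in>Ns. nest_val v lam w N S / Dn S)" by (simp only: inner)
  also have "\<dots> = (1 + (\<Sum>N\<in>Ns. nest_val v lam w N S)) / Dn S"
    by (simp only: sum_divide_distrib add_divide_distrib)
  also have "\<dots> = Dn S / Dn S" by (simp only: Dn_def)
  also have "\<dots> = 1" using Dn_ge1[of S] by simp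
  finally show ?thesis .
qed

lemma pmf_choice: assumes S: "S \<subseteq> {1..n}"
  shows "pmf (choice_pmf Ns v lam w S) i = nl_phi Ns v lam w i S"
  unfolding choice_pmf_def
proof (rule pmf_embed_pmf)
  show "\<And>x. 0 \<le> nl_phi Ns v lam w x S" using phi_nonneg[OF S] .
  have finS: "finite S" using S finite_subset by blast
  have "(\<integral>\<^sup>+ x. ennreal (nl_phi Ns v lam w x S) \<partial>count_space UNIV)
      = (\<Sum>x\<in>insert 0 S. ennreal (nl_phi Ns v lam w x S))"
    using finS by (intro nn_integral_count_space') (auto simp: phi_out)
  also have "\<dots> = ennreal (\<Sum>x\<in>insert 0 S. nl_phi Ns v lam w x S)"
    using phi_nonneg[OF S] by (simp add: sum_ennreal)
  also have "\<dots> = 1" using phi_sum[OF S] by simp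
  finally show "(\<integral>\<^sup>+ x. ennreal (nl_phi Ns v lam w x S) \<partial>count_space UNIV) = 1" .
qed

lemma nv_mono: assumes N: "N \<in> Ns" and S: "S \<subseteq> {1..n}"
  shows "nest_val v lam w N S \<le> nest_val v lam w N {1..n}"
proof -
  have NS: "N \<inter> {1..n} = N" using Ns_sub[OF N] by auto
  show ?thesis
  proof (cases "lam N = 0")
    case True thus ?thesis using Ns_ne[OF N] wpos N NS by (auto simp: nest_val_def)
  next
    case False
    have "(\<Sum>i\<in>N \<inter> S. v i) \<le> (\<Sum>i\<in>N. v i)"
      using N_fin[OF N] v_nonneg[OF N] by (intro sum_mono2) auto
    moreover have "0 \<le> (\<Sum>i\<in>N \<inter> S. v i)" using v_nonneg[OF N] by (intro sum_nonneg) auto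
    ultimately show ?thesis using False lam N NS unfolding nest_val_def
      by (simp add: powr_mono2)
  qed
qed

lemma Dn_mono: assumes S: "S \<subseteq> {1..n}" shows "Dn S \<le> Dn {1..n}"
  unfolding Dn_def using nv_mono[OF _ S] by (simp add: sum_mono)

lemma phi_mono: assumes S: "S \<subseteq> {1..n}" and i: "i \<in> insert 0 S"
  shows "nl_phi Ns v lam w i {1..n} \<le> nl_phi Ns v lam w i S"
proof (cases "i = 0")
  case True
  thus ?thesis using Dn_mono[OF S] Dn_ge1[of S]
    by (simp add: phi_0 frac_le)
next
  case False
  hence iS: "i \<in> S" using i by auto
  hence i1: "i \<in> {1..n}" using S by auto
  define N where "N = nest_of Ns i"
  have N: "N \<in> Ns" "i \<in> N" using nest_ex[OF i1] by (auto simp: N_def)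
  have NS: "N \<inter> {1..n} = N" using Ns_sub[OF N(1)] by auto
  have ne: "N \<inter> S \<noteq> {}" using N iS by auto
  have VS: "0 < (\<Sum>j\<in>N \<inter> S. v j)" using V_pos[OF N(1) S ne] .
  have VN: "0 < (\<Sum>j\<in>N. v j)" using V_pos[OF N(1) order.refl] NS Ns_ne[OF N(1)] by simp
  have VSN: "(\<Sum>j\<in>N \<inter> S. v j) \<le> (\<Sum>j\<in>N. v j)"
    using N_fin[OF N(1)] v_nonneg[OF N(1)] by (intro sum_mono2) auto
  have vi: "v i > 0" using vpos i1 by auto
  have D1: "0 < Dn S" "Dn S \<le> Dn {1..n}" using Dn_ge1[of S] Dn_mono[OF S] by auto
  have eS: "nl_phi Ns v lam w i S = nest_val v lam w N S / (\<Sum>j\<in>N \<inter> S. v j) * v i / Dn S"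
    using phi_in[OF False iS] by (simp add: N_def)
  have eN: "nl_phi Ns v lam w i {1..n} = nest_val v lam w N {1..n} / (\<Sum>j\<in>N. v j) * v i / Dn {1..n}"
    using phi_in[OF False i1] NS by (simp add: N_def)
  have key: "nest_val v lam w N {1..n} / (\<Sum>j\<in>N. v j) \<le> nest_val v lam w N S / (\<Sum>j\<in>N \<inter> S. v j)"
  proof (cases "lam N = 0")
    case True
    hence "nest_val v lam w N S = w N" "nest_val v lam w N {1..n} = w N"
      using ne NS Ns_ne[OF N(1)] by (auto simp: nest_val_def)
    moreover have "w N > 0" using wpos N True by auto
    ultimately show ?thesis using VS VSN by (simp add: frac_le)
  next
    case False
    have l: "lam N - 1 \<le> 0" using lam N by auto
    have "nest_val v lam w N S / (\<Sum>j\<in>N \<inter> S. v j) = (\<Sum>j\<in>N \<inter> S. v j) powr (lam N - 1)"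
      using False VS by (simp add: nest_val_def powr_diff)
    moreover have "nest_val v lam w N {1..n} / (\<Sum>j\<in>N. v j) = (\<Sum>j\<in>N. v j) powr (lam N - 1)"
      using False VN NS by (simp add: nest_val_def powr_diff)
    ultimately show ?thesis using powr_mono2'[OF l VS VSN] by simp
  qed
  have nn: "0 \<le> nest_val v lam w N S / (\<Sum>j\<in>N \<inter> S. v j) * v i"
    using nv_nonneg[OF N(1)] VS vi by simp
  have "nest_val v lam w N {1..n} / (\<Sum>j\<in>N. v j) * v i / Dn {1..n}
     \<le> nest_val v lam w N S / (\<Sum>j\<in>N \<inter> S. v j) * v i / Dn {1..n}"
    using key vi D1 by (intro divide_right_mono mult_right_mono) auto
  also have "\<dots> \<le> nest_val v lam w N S / (\<Sum>j\<in>N \<inter> S. v j) * v i / Dn S"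
    using nn D1 by (intro divide_left_mono) auto
  finally show ?thesis using eS eN by simp
qed

end


lemma map_eq_bernoulli:
  fixes M :: "'b pmf"
  shows "map_pmf (\<lambda>y. y = i) M = bernoulli_pmf (pmf M i)"
proof (rule pmf_eqI)
  fix b :: bool
  show "pmf (map_pmf (\<lambda>y. y = i) M) b = pmf (bernoulli_pmf (pmf M i)) b"
  proof (cases b)
    case True
    have "pmf (map_pmf (\<lambda>y. y = i) M) b = measure_pmf.prob M ((\<lambda>y. y = i) -` {b})"
      by (rule pmf_map)
    also have "(\<lambda>y. y = i) -` {b} = {i}" using True by auto
    finally show ?thesis using True by (simp add: measure_pmf_single pmf_le_1)
  next
    case False
    have "pmf (map_pmf (\<lambda>y. y = i) M) b = measure_pmf.prob M ((\<lambda>y. y = i) -` {b})"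
      by (rule pmf_map)
    also have "(\<lambda>y. y = i) -` {b} = UNIV - {i}" using False by auto
    also have "measure_pmf.prob M (UNIV - {i}) = 1 - pmf M i"
      using measure_pmf.prob_compl[of "{i}" M] by (simp add: measure_pmf_single)
    finally show ?thesis using False by (simp add: pmf_le_1)
  qed
qed

lemma count_dist:
  fixes A :: "'a set" and F :: "'a \<Rightarrow> 'b pmf" and dflt :: 'b
  assumes finA: "finite A" and SA: "S \<in> A"
  shows "map_pmf (\<lambda>\<omega>. card {k\<in>{..<m}. \<omega> (S, k) = i}) (Pi_pmf (A \<times> {..<m}) dflt (\<lambda>(S, k). F S))
         = binomial_pmf m (pmf (F S) i)"
proof -
  define I where "I = A \<times> {..<m}"
  define J where "J = {S} \<times> {..<m}"
  define G where "G = (\<lambda>(S::'a, k::nat). F S)"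
  have finI: "finite I" using finA by (simp add: I_def)
  have JI: "J \<subseteq> I" using SA by (auto simp: I_def J_def)
  have finJ: "finite J" by (simp add: J_def)
  have cardJ: "card J = m" by (simp add: J_def card_cartesian_product)
  define cnt where "cnt = (\<lambda>\<omega>::'a \<times> nat \<Rightarrow> 'b. card {x\<in>J. \<omega> x = i})"
  have cnt_eq: "card {k\<in>{..<m}. \<omega> (S, k) = i} = cnt \<omega>" for \<omega>
  proof -
    have "{x\<in>J. \<omega> x = i} = (\<lambda>k. (S, k)) ` {k\<in>{..<m}. \<omega> (S, k) = i}"
      by (auto simp: J_def)
    moreover have "inj (\<lambda>k::nat. (S, k))" by (auto simp: inj_def)
    ultimately show ?thesis unfolding cnt_def by (simp add: card_image inj_on_def)
  qed
  have cnt_restr: "cnt (\<lambda>x. if x \<in> J then \<omega> x else dflt) = cnt \<omega>" for \<omega>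
    unfolding cnt_def by (intro arg_cong[where f = card]) auto
  have "map_pmf (\<lambda>\<omega>. card {k\<in>{..<m}. \<omega> (S, k) = i}) (Pi_pmf I dflt G) = map_pmf cnt (Pi_pmf I dflt G)"
    by (simp only: cnt_eq)
  also have "\<dots> = map_pmf cnt (map_pmf (\<lambda>f x. if x \<in> J then f x else dflt) (Pi_pmf I dflt G))"
    by (simp add: pmf.map_comp o_def cnt_restr)
  also have "map_pmf (\<lambda>f x. if x \<in> J then f x else dflt) (Pi_pmf I dflt G) = Pi_pmf J dflt G"
    by (rule Pi_pmf_subset[OF finI JI, symmetric])
  also have "map_pmf cnt (Pi_pmf J dflt G)
      = map_pmf (\<lambda>h. card {x\<in>J. h x}) (map_pmf (\<lambda>\<omega>. (\<lambda>y. y = i) \<circ> \<omega>) (Pi_pmf J dflt G))"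
    by (simp add: pmf.map_comp o_def cnt_def)
  also have "map_pmf (\<lambda>\<omega>. (\<lambda>y. y = i) \<circ> \<omega>) (Pi_pmf J dflt G)
      = Pi_pmf J (dflt = i) (\<lambda>x. map_pmf (\<lambda>y. y = i) (G x))"
    by (rule Pi_pmf_map[OF finJ, symmetric]) simp
  also have "Pi_pmf J (dflt = i) (\<lambda>x. map_pmf (\<lambda>y. y = i) (G x))
      = Pi_pmf J (dflt = i) (\<lambda>_. bernoulli_pmf (pmf (F S) i))"
    by (intro Pi_pmf_cong refl) (auto simp: J_def G_def map_eq_bernoulli)
  also have "map_pmf (\<lambda>h. card {x\<in>J. h x}) \<dots> = binomial_pmf m (pmf (F S) i)"
    by (rule binomial_pmf_altdef'[OF finJ cardJ, symmetric]) (auto simp: pmf_le_1)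
  finally show ?thesis by (simp add: I_def G_def)
qed



lemma main:
  fixes n b :: nat and code :: "nat \<Rightarrow> nat list" and Ns :: "nat set set"
    and v :: "nat \<Rightarrow> real" and lam w :: "nat set \<Rightarrow> real" and \<rho> \<Delta> \<delta> K :: real and m :: nat
  assumes part: "is_partition Ns {1..n}"
    and vpos: "\<forall>i\<in>{1..n}. v i > 0"
    and lamc: "\<forall>N\<in>Ns. 0 \<le> lam N \<and> lam N \<le> 1"
    and wpos: "\<forall>N\<in>Ns. lam N = 0 \<longrightarrow> w N > 0"
    and r: "\<rho> \<in> {0<..<1}" and D: "\<Delta> \<in> {0<..<1}" and d: "\<delta> \<in> {0<..<1}"
    and hr: "\<forall>i\<in>insert 0 {1..n}. nl_phi Ns v lam w i {1..n} \<ge> \<rho>"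
    and hD: "\<forall>S\<in>design n b code. \<forall>i\<in>insert 0 S. \<forall>j\<in>insert 0 S.
        boost n Ns v lam w i S \<noteq> boost n Ns v lam w j S \<longrightarrow>
        \<bar>nl_phi Ns v lam w i S / (nl_phi Ns v lam w i S + nl_phi Ns v lam w j S)
          - nl_phi Ns v lam w i {1..n} / (nl_phi Ns v lam w i {1..n} + nl_phi Ns v lam w j {1..n})\<bar>
          \<ge> \<Delta>"
    and K: "K = real (card (design n b code) + 1) * (real (n + 1) + real ((n + 1) choose 2))"
    and hm: "real m \<ge> 3 * 10\<^sup>2 * ln (2 * K / \<delta>) / (\<rho> * \<Delta>\<^sup>2)"
  shows "measure_pmf.prob (sample_pmf (insert {1..n} (design n b code)) m Ns v lam w)
       {\<omega>. \<forall>S\<in>design n b code. \<forall>i\<in>insert 0 S. \<forall>j\<in>insert 0 S.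
            (\<bar>z_test n m \<omega> i j S\<bar> \<le> 8 * sqrt (3 * ln (2 * K / \<delta>)) \<longleftrightarrow>
             boost n Ns v lam w i S = boost n Ns v lam w j S)}
       \<ge> 1 - \<delta>"
proof -
  define Dg where "Dg = design n b code"
  define A where "A = insert {1..n} Dg"
  define L where "L = ln (2 * K / \<delta>)"
  define \<phi> where "\<phi> = (\<lambda>i S. nl_phi Ns v lam w i S)"
  define M where "M = sample_pmf A m Ns v lam w"
  have r0: "0 < \<rho>" and D0: "0 < \<Delta>" "\<Delta> \<le> 1" and d0: "0 < \<delta>" "\<delta> < 1"
    using r D d by auto
  have Dsub: "\<forall>S\<in>Dg. S \<subseteq> {1..n}" unfolding Dg_def design_def S_minus_def by auto
  have Asub: "\<forall>S\<in>A. S \<subseteq> {1..n}" using Dsub by (auto simp: A_def)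
  have finD: "finite Dg"
  proof -
    have "Dg \<subseteq> Pow {1..n}" using Dsub by auto
    thus ?thesis by (rule finite_subset) simp
  qed
  have finA: "finite A" using finD by (simp add: A_def)
  have Kge: "K \<ge> real (card Dg + 1) * real (n + 1)"
    unfolding K Dg_def by (intro mult_left_mono) auto
  have K1: "K \<ge> 1"
  proof -
    have "1 * 1 \<le> real (card Dg + 1) * real (n + 1)"
      by (intro mult_mono) auto
    thus ?thesis using Kge by linarith
  qed
  have Lpos: "L > 0"
  proof -
    have "1 < 2 * K / \<delta>" using K1 d0 by (simp add: field_simps)
    thus ?thesis unfolding L_def by simp
  qed
  have mpos: "real m > 0"
  proof -
    have "0 < 3 * 10\<^sup>2 * L / (\<rho> * \<Delta>\<^sup>2)" using Lpos r0 D0 by simp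
    thus ?thesis using hm unfolding L_def by linarith
  qed
  define E where "E = 8 * L / real m"
  have E0: "E \<ge> 0" using Lpos mpos by (simp add: E_def)
  have E300: "300 * E \<le> 8 * \<rho> * \<Delta>^2"
  proof -
    have "300 * L / (\<rho> * \<Delta>\<^sup>2) \<le> real m" using hm unfolding L_def by simp
    hence "300 * L \<le> real m * (\<rho> * \<Delta>\<^sup>2)" using r0 D0 by (simp add: pos_divide_le_eq)
    thus ?thesis unfolding E_def using mpos by (simp add: field_simps)
  qed
  have E16: "E \<le> \<rho> / 16"
  proof -
    have "\<Delta>^2 \<le> 1" using D0 by (simp add: power_le_one)
    hence "8 * \<rho> * \<Delta>^2 \<le> 8 * \<rho> * 1" using r0 by (intro mult_left_mono) auto
    thus ?thesis using E300 r0 by linarith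
  qed
  note ctx = part vpos lamc wpos
  have phi_ge: "\<rho> \<le> \<phi> i S" if "S \<in> A" "i \<in> insert 0 S" for i S
  proof -
    have "S \<subseteq> {1..n}" using Asub that(1) by blast
    hence "i \<in> insert 0 {1..n}" using that(2) by blast
    hence "\<rho> \<le> \<phi> i {1..n}" using hr unfolding \<phi>_def by blast
    also have "\<phi> i {1..n} \<le> \<phi> i S"
      unfolding \<phi>_def by (rule phi_mono[OF ctx]) (use that Asub in auto)
    finally show ?thesis .
  qed
  define G where "G = {\<omega>. \<forall>S\<in>A. \<forall>i\<in>insert 0 S. (emp_freq m \<omega> i S - \<phi> i S)^2 \<le> E * \<phi> i S}"
  have GT: "G \<subseteq> {\<omega>. \<forall>S\<in>Dg. \<forall>i\<in>insert 0 S. \<forall>j\<in>insert 0 S.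
            (\<bar>z_test n m \<omega> i j S\<bar> \<le> 8 * sqrt (3 * L) \<longleftrightarrow>
             boost n Ns v lam w i S = boost n Ns v lam w j S)}"
  proof (intro subsetI CollectI ballI)
    fix \<omega> S i j assume \<omega>G: "\<omega> \<in> G" and SD: "S \<in> Dg" and i: "i \<in> insert 0 S" and j: "j \<in> insert 0 S"
    have SA: "S \<in> A" using SD by (simp add: A_def)
    have nA: "{1..n} \<in> A" by (simp add: A_def)
    have Ssub: "S \<subseteq> {1..n}" using Dsub SD by blast
    have i': "i \<in> insert 0 {1..n}" and j': "j \<in> insert 0 {1..n}" using i j Ssub by blast+
    define a where "a = \<phi> i S"
    define c where "c = \<phi> j S"
    define a' where "a' = \<phi> i {1..n}"
    define c' where "c' = \<phi> j {1..n}"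
    define x where "x = emp_freq m \<omega> i S"
    define y where "y = emp_freq m \<omega> j S"
    define x' where "x' = emp_freq m \<omega> i {1..n}"
    define y' where "y' = emp_freq m \<omega> j {1..n}"
    have bd: "(x - a)^2 \<le> E * a" "(y - c)^2 \<le> E * c" "(x' - a')^2 \<le> E * a'" "(y' - c')^2 \<le> E * c'"
      using \<omega>G SA nA i j i' j' unfolding G_def x_def y_def x'_def y'_def a_def c_def a'_def c'_def by blast+
    have ge: "\<rho> \<le> a" "\<rho> \<le> c" "\<rho> \<le> a'" "\<rho> \<le> c'"
      using phi_ge[OF SA i] phi_ge[OF SA j] phi_ge[OF nA i'] phi_ge[OF nA j']
      by (simp_all add: a_def c_def a'_def c'_def)
    have apos: "0 < a" "0 < c" "0 < a'" "0 < c'" using ge r0 by linarith+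
    have Ea: "E \<le> a / 16" "E \<le> c / 16" "E \<le> a' / 16" "E \<le> c' / 16" using ge E16 by linarith+
    have xpos: "0 < x" "0 < y" "0 < x'" "0 < y'"
      using close_est(1)[OF apos(1) bd(1) Ea(1)] close_est(1)[OF apos(2) bd(2) Ea(2)]
        close_est(1)[OF apos(3) bd(3) Ea(3)] close_est(1)[OF apos(4) bd(4) Ea(4)] apos
      by linarith+
    have zeq: "z_test n m \<omega> i j S = zstat m x y x' y'"
      by (simp add: z_test_def x_def y_def x'_def y'_def)
    have iff: "(\<bar>zstat m x y x' y'\<bar> \<le> 8 * sqrt (3 * L)) \<longleftrightarrow>
         (x/(x+y) - x'/(x'+y'))^2 \<le> 24 * E * ((x+x')/(x+y+x'+y')) * ((y+y')/(x+y+x'+y'))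
            * (1/(x+y) + 1/(x'+y'))"
      using zstat_sq[of m x y x' y' L] mpos xpos Lpos unfolding E_def by simp
    have bi: "boost n Ns v lam w i S = a / a'" "boost n Ns v lam w j S = c / c'"
      by (simp_all add: boost_def a_def a'_def c_def c'_def \<phi>_def)
    show "(\<bar>z_test n m \<omega> i j S\<bar> \<le> 8 * sqrt (3 * L)) \<longleftrightarrow>
          boost n Ns v lam w i S = boost n Ns v lam w j S"
    proof (cases "boost n Ns v lam w i S = boost n Ns v lam w j S")
      case True
      hence "a / a' = c / c'" using bi by simp
      hence "a * c' = c * a'" using apos by (simp add: field_simps)
      hence eqp: "a / (a + c) = a' / (a' + c')" using apos by (simp add: field_simps algebra_simps)
      have "(x/(x+y) - x'/(x'+y'))^2 \<le> 24 * E * ((x+x')/(x+y+x'+y')) * ((y+y')/(x+y+x'+y'))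
            * (1/(x+y) + 1/(x'+y'))"
        by (rule det_null[OF r0 ge E0 E16 bd eqp])
      thus ?thesis using iff zeq True by simp
    next
      case False
      have gap: "\<Delta> \<le> \<bar>a / (a + c) - a' / (a' + c')\<bar>"
        using hD SD i j False unfolding Dg_def a_def c_def a'_def c'_def \<phi>_def by blast
      have "(x/(x+y) - x'/(x'+y'))^2 > 24 * E * ((x+x')/(x+y+x'+y')) * ((y+y')/(x+y+x'+y'))
            * (1/(x+y) + 1/(x'+y'))"
        by (rule det_alt[OF r0 ge E0 E300 D0 bd gap])
      thus ?thesis using iff zeq False by simp
    qed
  qed
  have PG: "measure_pmf.prob M G \<ge> 1 - \<delta>"
  proof -
    define Idx where "Idx = Sigma A (\<lambda>S. insert 0 S)"
    define Bad where "Bad = (\<lambda>(S, i). {\<omega>. (emp_freq m \<omega> i S - \<phi> i S)^2 > E * \<phi> i S})"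
    have finIdx: "finite Idx" unfolding Idx_def using finA Asub
      by (intro finite_SigmaI) (auto intro: finite_subset)
    have compl: "UNIV - G = (\<Union>x\<in>Idx. Bad x)"
      by (auto simp: G_def Bad_def Idx_def not_le) (metis insertCI leD)
    have each: "measure_pmf.prob M (Bad x) \<le> \<delta> / K" if x: "x \<in> Idx" for x
    proof -
      obtain S i where x_eq: "x = (S, i)" by (cases x)
      have SA: "S \<in> A" and iS: "i \<in> insert 0 S" using x by (auto simp: x_eq Idx_def)
      have Ssub: "S \<subseteq> {1..n}" using Asub SA by blast
      define p where "p = \<phi> i S"
      have pge: "\<rho> \<le> p" using phi_ge[OF SA iS] by (simp add: p_def)
      have pmfp: "pmf (choice_pmf Ns v lam w S) i = p"
        unfolding p_def \<phi>_def by (rule pmf_choice[OF ctx Ssub])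
      have p1: "p \<le> 1" using pmfp pmf_le_1 by metis
      define cnt where "cnt = (\<lambda>\<omega>::nat set \<times> nat \<Rightarrow> nat. card {k\<in>{..<m}. \<omega> (S, k) = i})"
      have mapeq: "map_pmf cnt M = binomial_pmf m p"
        unfolding cnt_def M_def sample_pmf_def
        using count_dist[OF finA SA, of m i 0 "choice_pmf Ns v lam w"] pmfp by simp
      have "Bad x = cnt -` {k. (real k / real m - p)^2 > E * p}"
        by (auto simp: x_eq Bad_def cnt_def emp_freq_def p_def)
      hence "measure_pmf.prob M (Bad x) = measure_pmf.prob (map_pmf cnt M) {k. (real k / real m - p)^2 > E * p}"
        by simp
      also have "\<dots> = measure_pmf.prob (binomial_pmf m p) {k. (real k / real m - p)^2 > E * p}"
        by (simp only: mapeq)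
      also have "\<dots> \<le> 2 * exp (- (real m * E / 8))"
      proof (rule chernoff_sq)
        show "0 < p" using pge r0 by simp
        show "p \<le> 1" by (rule p1)
        show "0 \<le> E" by (rule E0)
        show "E \<le> 4 * p" using E16 pge r0 by linarith
        show "m > 0" using mpos by simp
      qed
      also have "real m * E / 8 = L" using mpos by (simp add: E_def)
      also have "2 * exp (- L) = \<delta> / K"
      proof -
        have "exp (- L) = 1 / exp L" by (simp add: exp_minus field_simps)
        also have "exp L = 2 * K / \<delta>" unfolding L_def using K1 d0 by simp
        finally show ?thesis using K1 d0 by simp
      qed
      finally show ?thesis .
    qed
    have cardIdx: "real (card Idx) \<le> K"
    proof -
      have "card Idx = (\<Sum>S\<in>A. card (insert 0 S))"
        unfolding Idx_def using finA Asub by (intro card_SigmaI) (auto intro: finite_subset)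
      also have "\<dots> \<le> (\<Sum>S\<in>A. n + 1)"
      proof (intro sum_mono)
        fix S assume "S \<in> A"
        hence "insert 0 S \<subseteq> insert 0 {1..n}" using Asub by blast
        hence "card (insert 0 S) \<le> card (insert 0 {1..n})" by (intro card_mono) auto
        thus "card (insert 0 S) \<le> n + 1" by simp
      qed
      also have "\<dots> = card A * (n + 1)" by simp
      also have "\<dots> \<le> (card Dg + 1) * (n + 1)"
      proof -
        have "card A \<le> card Dg + 1" unfolding A_def using card_insert_le_m1 finD
          by (simp add: card_insert_if)
        thus ?thesis by (rule mult_le_mono1)
      qed
      finally have "real (card Idx) \<le> real ((card Dg + 1) * (n + 1))" by linarith
      also have "\<dots> = real (card Dg + 1) * real (n + 1)" by (simp only: of_nat_mult)
      finally show ?thesis using Kge by linarith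
    qed
    have "measure_pmf.prob M (UNIV - G) \<le> (\<Sum>x\<in>Idx. measure_pmf.prob M (Bad x))"
      unfolding compl by (rule measure_pmf.finite_measure_subadditive_finite[OF finIdx]) auto
    also have "\<dots> \<le> (\<Sum>x\<in>Idx. \<delta> / K)" by (intro sum_mono each)
    also have "\<dots> = real (card Idx) * (\<delta> / K)" by simp
    also have "\<dots> \<le> K * (\<delta> / K)" using cardIdx d0 K1 by (intro mult_right_mono) auto
    also have "\<dots> = \<delta>" using K1 by simp
    finally have "measure_pmf.prob M (UNIV - G) \<le> \<delta>" .
    moreover have "measure_pmf.prob M (UNIV - G) = 1 - measure_pmf.prob M G"
      using measure_pmf.prob_compl[of G M] by (simp add: Compl_eq_Diff_UNIV)
    ultimately show ?thesis by linarith
  qed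
  have "measure_pmf.prob M G \<le> measure_pmf.prob M {\<omega>. \<forall>S\<in>Dg. \<forall>i\<in>insert 0 S. \<forall>j\<in>insert 0 S.
            (\<bar>z_test n m \<omega> i j S\<bar> \<le> 8 * sqrt (3 * L) \<longleftrightarrow>
             boost n Ns v lam w i S = boost n Ns v lam w j S)}"
    using GT by (intro measure_pmf.finite_measure_mono) auto
  thus ?thesis using PG unfolding M_def A_def Dg_def L_def by linarith
qed

theorem theorem4p6:
  "\<exists>C::real. \<forall>(n::nat) (b::nat) (code::nat \<Rightarrow> nat list) (Ns::nat set set)
      (v::nat \<Rightarrow> real) (lam::nat set \<Rightarrow> real) (w::nat set \<Rightarrow> real)
      (\<rho>::real) (\<Delta>::real) (\<delta>::real) (m::nat).
    n \<ge> 2 \<longrightarrow> b \<ge> 2 \<longrightarrow>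
    (\<forall>i\<in>{1..n}. length (code i) = num_levels b n \<and> set (code i) \<subseteq> {..<b}) \<longrightarrow>
    inj_on code {1..n} \<longrightarrow>
    is_partition Ns {1..n} \<longrightarrow>
    (\<forall>i\<in>{1..n}. v i > 0) \<longrightarrow>
    (\<forall>N\<in>Ns. 0 \<le> lam N \<and> lam N \<le> 1) \<longrightarrow>
    (\<forall>N\<in>Ns. lam N = 0 \<longrightarrow> w N > 0) \<longrightarrow>
    \<rho> \<in> {0<..<1} \<longrightarrow> \<Delta> \<in> {0<..<1} \<longrightarrow> \<delta> \<in> {0<..<1} \<longrightarrow>
    (\<forall>i\<in>insert 0 {1..n}. nl_phi Ns v lam w i {1..n} \<ge> \<rho>) \<longrightarrow>
    (\<forall>S\<in>design n b code. \<forall>i\<in>insert 0 S. \<forall>j\<in>insert 0 S.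
        boost n Ns v lam w i S \<noteq> boost n Ns v lam w j S \<longrightarrow>
        \<bar>nl_phi Ns v lam w i S / (nl_phi Ns v lam w i S + nl_phi Ns v lam w j S)
          - nl_phi Ns v lam w i {1..n} / (nl_phi Ns v lam w i {1..n} + nl_phi Ns v lam w j {1..n})\<bar>
          \<ge> \<Delta>) \<longrightarrow>
    (let K = real (card (design n b code) + 1) * (real (n + 1) + real ((n + 1) choose 2)) in
     real m \<ge> 3 * C\<^sup>2 * ln (2 * K / \<delta>) / (\<rho> * \<Delta>\<^sup>2) \<longrightarrow>
     measure_pmf.prob (sample_pmf (insert {1..n} (design n b code)) m Ns v lam w)
       {\<omega>. \<forall>S\<in>design n b code. \<forall>i\<in>insert 0 S. \<forall>j\<in>insert 0 S.
            (\<bar>z_test n m \<omega> i j S\<bar> \<le> 8 * sqrt (3 * ln (2 * K / \<delta>)) \<longleftrightarrow>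
             boost n Ns v lam w i S = boost n Ns v lam w j S)}
       \<ge> 1 - \<delta>)"
    apply (rule exI[of _ 10])
  apply (intro allI impI)
  subgoal for n b code Ns v lam w \<rho> \<Delta> \<delta> m
    unfolding Let_def
    apply (intro impI)
    apply (rule main[where \<rho> = \<rho> and \<Delta> = \<Delta> and \<delta> = \<delta>])
    apply (assumption | rule refl)+
    done
  done

end
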